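(* Let $F$ and $G$ be finite nonempty sets of linear (affine) functions $\mathbb{R}\to\mathbb{R}$, and let $H=\{f\circ g : f\in F, g\in G\}$. For a finite set $S$ of such functions write $S_\downarrow(x)=\min_{f\in S}f(x)$ and $S_\uparrow(x)=\max_{f\in S}f(x)$. Then $H_\downarrow(x)=\min\{F_\downarrow(G_\downarrow(x)),F_\downarrow(G_\uparrow(x))\}$, $H_\uparrow(x)=\max\{F_\uparrow(G_\downarrow(x)),F_\uparrow(G_\uparrow(x))\}$, $p(H_\downarrow)\le 4p(F_\downarrow)+2p(G_\downarrow)+2p(G_\uparrow)$, and $p(H_\uparrow)\le 4p(F_\uparrow)+2p(G_\downarrow)+2p(G_\uparrow)$.
   Context: For a piecewise linear function $f:\mathbb{R}\to\mathbb{R}$, $p(f)$ denotes its number of (maximal linear) pieces. "Linear function" means a function of the form $x\mapsto ax+b$. *)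

theory Defs
  imports "HOL-Analysis.Analysis"
begin

definition linear_fun :: "(real \<Rightarrow> real) \<Rightarrow> bool" where
  "linear_fun f \<longleftrightarrow> (\<exists>a b. \<forall>x. f x = a * x + b)"

definition lower_env :: "(real \<Rightarrow> real) set \<Rightarrow> real \<Rightarrow> real" where
  "lower_env S x = Min ((\<lambda>f. f x) ` S)"

definition upper_env :: "(real \<Rightarrow> real) set \<Rightarrow> real \<Rightarrow> real" where
  "upper_env S x = Max ((\<lambda>f. f x) ` S)"

definition num_pieces :: "(real \<Rightarrow> real) \<Rightarrow> nat" where
  "num_pieces f = (LEAST n. \<exists>P. finite P \<and> card P = n \<and> \<Union>P = UNIV \<and> disjoint P \<and>
      (\<forall>I\<in>P. I \<noteq> {} \<and> is_interval I \<and> (\<exists>a b. \<forall>x\<in>I. f x = a * x + b)))"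

end

theory Submission
  imports Defs
begin


definition ppart :: "(real \<Rightarrow> real) \<Rightarrow> real set set \<Rightarrow> bool" where
  "ppart h P \<longleftrightarrow> finite P \<and> \<Union>P = UNIV \<and> disjoint P \<and>
     (\<forall>I\<in>P. I \<noteq> {} \<and> is_interval I \<and> (\<exists>a b. \<forall>x\<in>I. h x = a * x + b))"

lemma num_pieces_alt: "num_pieces h = (LEAST n. \<exists>P. ppart h P \<and> card P = n)"
  unfolding num_pieces_def ppart_def by (simp add: conj_ac)

lemma num_pieces_le: "ppart h P \<Longrightarrow> num_pieces h \<le> card P"
  unfolding num_pieces_alt by (rule Least_le) blast

lemma num_pieces_ex: "ppart h P \<Longrightarrow> \<exists>Q. ppart h Q \<and> card Q = num_pieces h"
  unfolding num_pieces_alt by (rule LeastI_ex) blast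

lemma ppart_neg: "ppart h P \<Longrightarrow> ppart (\<lambda>x. - h x) P"
proof -
  assume H: "ppart h P"
  have H1: "finite P" "\<Union>P = UNIV" "disjoint P" using H unfolding ppart_def by simp_all
  have H2: "I \<noteq> {}" "is_interval I" "\<exists>a b. \<forall>x\<in>I. h x = a * x + b" if "I \<in> P" for I
    using H that unfolding ppart_def by simp_all
  have H3: "\<exists>a b. \<forall>x\<in>I. - h x = a * x + b" if IP: "I \<in> P" for I
  proof -
    obtain a b where "\<forall>x\<in>I. h x = a * x + b" using H2(3)[OF IP] by (elim exE)
    then have "\<forall>x\<in>I. - h x = (-a) * x + (-b)" by simp
    then show ?thesis by (intro exI)
  qed
  show ?thesis unfolding ppart_def using H1 H2(1,2) H3 by simp
qed

lemma ppart_neg_iff: "ppart (\<lambda>x. - h x) P = ppart h P"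
proof
  assume "ppart (\<lambda>x. - h x) P"
  then have "ppart (\<lambda>x. - (- h x)) P" by (rule ppart_neg)
  then show "ppart h P" by simp
next
  assume "ppart h P"
  then show "ppart (\<lambda>x. - h x) P" by (rule ppart_neg)
qed

lemma num_pieces_neg: "num_pieces (\<lambda>x. - h x) = num_pieces h"
  by (simp only: num_pieces_alt ppart_neg_iff)

lemma lin_eq: "linear_fun l \<Longrightarrow> l x = (l 1 - l 0) * x + l 0"
  unfolding linear_fun_def by auto

lemma lin_neg: "linear_fun l \<Longrightarrow> linear_fun (\<lambda>x. - l x)"
proof -
  assume "linear_fun l"
  then obtain a b where "\<forall>x. l x = a * x + b" unfolding linear_fun_def by blast
  then have "\<forall>x. - l x = (-a) * x + (-b)" by simp
  then show ?thesis unfolding linear_fun_def by blast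
qed

lemma lin_comp: "linear_fun f \<Longrightarrow> linear_fun g \<Longrightarrow> linear_fun (f \<circ> g)"
  unfolding linear_fun_def
proof (elim exE)
  fix a b c d assume f: "\<forall>x. f x = a * x + b" and g: "\<forall>x. g x = c * x + d"
  have "\<forall>x. (f \<circ> g) x = (a*c) * x + (a*d+b)" using f g by (simp add: algebra_simps)
  then show "\<exists>a b. \<forall>x. (f \<circ> g) x = a * x + b" by blast
qed

lemma ppart_single: "linear_fun l \<Longrightarrow> ppart l {UNIV}"
  unfolding ppart_def disjoint_def linear_fun_def by simp




lemma envT:
  assumes "finite L" "L \<noteq> {}" "\<forall>l\<in>L. linear_fun l"
  shows "\<exists>P. ppart (lower_env L) P \<and> card P \<le> card L"
  using assms
proof (induction "card L" arbitrary: L rule: less_induct)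
  case less
  define sl where "sl l = l 1 - l 0" for l :: "real \<Rightarrow> real"
  have "Min (sl ` L) \<in> sl ` L" using less.prems by simp
  then obtain l0 where l0L: "l0 \<in> L" and l0m: "sl l0 = Min (sl ` L)" by auto
  have l0min: "sl l0 \<le> sl l" if "l \<in> L" for l
    using l0m that less.prems by simp
  show ?case
  proof (cases "L = {l0}")
    case True
    have "lower_env L = l0" unfolding lower_env_def True by (rule ext) simp
    then show ?thesis using ppart_single[of l0] less.prems l0L True by auto
  next
    case False
    define L' where "L' = L - {l0}"
    have L'ne: "L' \<noteq> {}" using False l0L L'_def by auto
    have finL': "finite L'" using less.prems L'_def by auto
    have cardL': "card L' < card L" unfolding L'_def using less.prems(1) l0L by (rule card_Diff1_less)
    have cardL'': "card L = card L' + 1" using less.prems l0L L'_def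
      by (metis card_Diff1_less add.commute card.remove plus_1_eq_Suc)
    have linL': "\<forall>l\<in>L'. linear_fun l" using less.prems L'_def by auto
    obtain P where P: "ppart (lower_env L') P" "card P \<le> card L'"
      using less.hyps[OF cardL' finL' L'ne linL'] by blast
    define h' where "h' = lower_env L'"
    define A where "A = {x. l0 x \<le> h' x}"
    define D where "D = - A"
    have LL: "L = insert l0 L'" using l0L L'_def by auto
    have env: "lower_env L x = min (l0 x) (h' x)" for x
      unfolding lower_env_def h'_def LL image_insert
      by (rule Min_insert) (use finL' L'ne in auto)
    have up: "y \<in> A" if "x \<in> A" "x \<le> y" for x y
    proof -
      have "l0 y \<le> l y" if lL: "l \<in> L'" for l
      proof -
        have ll: "linear_fun l" "linear_fun l0" using linL' lL less.prems l0L by auto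
        have "h' x \<le> l x" unfolding h'_def lower_env_def using finL' lL by simp
        then have hx: "l0 x \<le> l x" using \<open>x \<in> A\<close> A_def by simp
        have s: "sl l0 \<le> sl l" using l0min lL L'_def by auto
        have m: "(sl l - sl l0) * x \<le> (sl l - sl l0) * y"
          by (rule mult_left_mono) (use s \<open>x \<le> y\<close> in auto)
        have e1: "l y - l0 y = (sl l - sl l0) * y + (l 0 - l0 0)"
          using lin_eq[OF ll(1), of y] lin_eq[OF ll(2), of y] unfolding sl_def by (simp add: algebra_simps)
        have e2: "l x - l0 x = (sl l - sl l0) * x + (l 0 - l0 0)"
          using lin_eq[OF ll(1), of x] lin_eq[OF ll(2), of x] unfolding sl_def by (simp add: algebra_simps)
        show ?thesis using e1 e2 m hx by linarith
      qed
      then have "l0 y \<le> h' y" unfolding h'_def lower_env_def using finL' L'ne by simp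
      then show ?thesis unfolding A_def by simp
    qed
    have intA: "is_interval A" unfolding is_interval_1 using up by blast
    have intD: "is_interval D" unfolding is_interval_1 D_def using up by blast
    define P2 where "P2 = ((\<lambda>I. I \<inter> D) ` P \<union> {A}) - {{}}"
    have finP: "finite P" using P(1) unfolding ppart_def by blast
    have "card P2 \<le> card ((\<lambda>I. I \<inter> D) ` P \<union> {A})" unfolding P2_def
      using finP by (intro card_mono) auto
    also have "\<dots> \<le> card ((\<lambda>I. I \<inter> D) ` P) + card {A}" by (rule card_Un_le)
    also have "\<dots> \<le> card P + 1" using card_image_le[OF finP, of "\<lambda>I. I \<inter> D"] by simp
    finally have cP2: "card P2 \<le> card L" using P(2) cardL'' by linarith
    have Pp: "\<Union>P = UNIV" "disjoint P"
      "\<forall>I\<in>P. I \<noteq> {} \<and> is_interval I \<and> (\<exists>a b. \<forall>x\<in>I. lower_env L' x = a * x + b)"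
      using P(1) unfolding ppart_def by auto
    have "ppart (lower_env L) P2"
      unfolding ppart_def
    proof (intro conjI)
      show "finite P2" unfolding P2_def using finP by auto
      show "\<Union>P2 = UNIV"
      proof (rule set_eqI, rule iffI)
        fix x :: real assume "x \<in> UNIV"
        show "x \<in> \<Union>P2"
        proof (cases "x \<in> A")
          case True then show ?thesis unfolding P2_def by blast
        next
          case False
          then have xD: "x \<in> D" unfolding D_def by simp
          obtain I where "I \<in> P" "x \<in> I" using Pp(1) by blast
          then show ?thesis unfolding P2_def using xD by blast
        qed
      qed simp
      show "disjoint P2"
        unfolding disjoint_def
      proof (intro ballI impI)
        fix S T assume S: "S \<in> P2" and T: "T \<in> P2" and ST: "S \<noteq> T"
        show "S \<inter> T = {}"
        proof (cases "S = A")
          case True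
          then obtain I where "T = I \<inter> D" using T ST unfolding P2_def by auto
          then show ?thesis using True D_def by auto
        next
          case SA: False
          then obtain I where I: "I \<in> P" "S = I \<inter> D" using S unfolding P2_def by auto
          show ?thesis
          proof (cases "T = A")
            case True then show ?thesis using I D_def by auto
          next
            case False
            then obtain J where J: "J \<in> P" "T = J \<inter> D" using T unfolding P2_def by auto
            have "I \<noteq> J" using I J ST by auto
            then have "I \<inter> J = {}" using Pp(2) I J unfolding disjoint_def by blast
            then show ?thesis using I J by auto
          qed
        qed
      qed
      show "\<forall>I\<in>P2. I \<noteq> {} \<and> is_interval I \<and> (\<exists>a b. \<forall>x\<in>I. lower_env L x = a * x + b)"
      proof
        fix S assume S: "S \<in> P2"
        have ne: "S \<noteq> {}" using S unfolding P2_def by auto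
        show "S \<noteq> {} \<and> is_interval S \<and> (\<exists>a b. \<forall>x\<in>S. lower_env L x = a * x + b)"
        proof (cases "S = A")
          case True
          have "lower_env L x = sl l0 * x + l0 0" if xS: "x \<in> S" for x
          proof -
            have "lower_env L x = l0 x" using True env A_def xS by auto
            also have "\<dots> = sl l0 * x + l0 0" unfolding sl_def
              using lin_eq[of l0 x] less.prems(3) l0L by blast
            finally show ?thesis .
          qed
          then have "\<forall>x\<in>S. lower_env L x = sl l0 * x + l0 0" by blast
          then show ?thesis using ne intA True by blast
        next
          case False
          then obtain I where I: "I \<in> P" "S = I \<inter> D" using S unfolding P2_def by auto
          obtain a b where ab: "\<forall>x\<in>I. lower_env L' x = a * x + b" using Pp(3) I(1) by blast
          have "\<forall>x\<in>S. lower_env L x = a * x + b"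
            using ab I(2) env unfolding D_def A_def h'_def by auto
          moreover have "is_interval S" using I Pp(3) intD is_interval_Int by blast
          ultimately show ?thesis using ne by blast
        qed
      qed
    qed
    then show ?thesis using cP2 by blast
  qed
qed



lemma piece_line:
  assumes finS: "finite S" and linS: "\<forall>s\<in>S. linear_fun s"
    and act: "\<forall>y. \<exists>s\<in>S. h y = s y"
    and ne: "I \<noteq> {}" and intI: "is_interval I" and ab: "\<forall>x\<in>I. h x = a * x + b"
  shows "\<exists>s\<in>S. \<forall>y\<in>I. h y = s y"
proof (cases "\<exists>u v. u \<in> I \<and> v \<in> I \<and> u < v")
  case False
  obtain u where u: "u \<in> I" using ne by blast
  have II: "I = {u}"
  proof
    show "I \<subseteq> {u}"
    proof
      fix v assume "v \<in> I"
      then have "\<not> u < v" "\<not> v < u" using False u by blast+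
      then show "v \<in> {u}" by simp
    qed
  qed (use u in simp)
  obtain s where "s \<in> S" "h u = s u" using act by blast
  then show ?thesis using II by blast
next
  case True
  then obtain u v where uv: "u \<in> I" "v \<in> I" "u < v" by blast
  have sub: "{u..v} \<subseteq> I"
  proof
    fix y assume "y \<in> {u..v}"
    then have "u \<le> y" "y \<le> v" by auto
    then show "y \<in> I" using intI uv(1,2) unfolding is_interval_1 by blast
  qed
  have inf: "infinite {u..v}" using uv(3) by simp
  have cov: "{u..v} \<subseteq> (\<Union>s\<in>S. {y\<in>{u..v}. h y = s y})" using act by blast
  have "\<exists>s\<in>S. infinite {y\<in>{u..v}. h y = s y}"
  proof (rule ccontr)
    assume "\<not> ?thesis"
    then have "finite (\<Union>s\<in>S. {y\<in>{u..v}. h y = s y})" by (intro finite_UN_I finS) blast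
    then have "finite {u..v}" by (rule finite_subset[OF cov])
    then show False using inf by blast
  qed
  then obtain s where sS: "s \<in> S" and infs: "infinite {y\<in>{u..v}. h y = s y}" by blast
  define T where "T = {y\<in>{u..v}. h y = s y}"
  obtain y1 where y1: "y1 \<in> T" using infs T_def by (metis finite.emptyI ex_in_conv)
  have "infinite (T - {y1})" using infs T_def by simp
  then obtain y2 where y2: "y2 \<in> T - {y1}" by (metis finite.emptyI ex_in_conv)
  have ls: "linear_fun s" using linS sS by blast
  define c where "c = s 1 - s 0"
  have se: "s y = c * y + s 0" for y unfolding c_def using lin_eq[OF ls, of y] .
  have e1: "a * y1 + b = c * y1 + s 0" using y1 sub ab se[of y1] unfolding T_def by auto
  have e2: "a * y2 + b = c * y2 + s 0" using y2 sub ab se[of y2] unfolding T_def by auto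
  have ne12: "y1 \<noteq> y2" using y2 by blast
  have "(a - c) * (y1 - y2) = 0" using e1 e2 by (simp add: algebra_simps)
  then have ac: "a = c" using ne12 by simp
  then have "b = s 0" using e1 by simp
  then have "\<forall>y\<in>I. h y = s y" using ab ac se by metis
  then show ?thesis using sS by blast
qed

lemma intv: "is_interval (I::real set) \<Longrightarrow> a \<in> I \<Longrightarrow> b \<in> I \<Longrightarrow> a \<le> x \<Longrightarrow> x \<le> b \<Longrightarrow> x \<in> I"
  unfolding is_interval_1 by (elim ballE allE impE) auto

lemma cells:
  fixes P Q :: "real set set"
  assumes finP: "finite P" and finQ: "finite Q" and disP: "disjoint P" and disQ: "disjoint Q"
    and intP: "\<forall>I\<in>P. is_interval I" and intQ: "\<forall>K\<in>Q. is_interval K"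
  shows "card {(I,K). I \<in> P \<and> K \<in> Q \<and> I \<inter> K \<noteq> {}} \<le> card P + card Q"
proof -
  define cap where "cap I K \<longleftrightarrow> (\<forall>p\<in>I. \<exists>c\<in>I\<inter>K. p \<le> c)" for I K :: "real set"
  have one: "cap I K \<or> cap K I" if hI: "is_interval I" and hK: "is_interval K" and hIK: "I \<inter> K \<noteq> {}" for I K
  proof (rule ccontr)
    assume "\<not> (cap I K \<or> cap K I)"
    then obtain p q where p: "p \<in> I" "\<forall>c\<in>I\<inter>K. \<not> p \<le> c" and q: "q \<in> K" "\<forall>c\<in>K\<inter>I. \<not> q \<le> c"
      unfolding cap_def by blast
    obtain c0 where c0: "c0 \<in> I \<inter> K" using hIK by blast
    show False
    proof (cases "p \<le> q")
      case True
      have "\<not> p \<le> c0" using p(2) c0 by blast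
      then have "c0 \<le> p" by linarith
      then have "p \<in> K" using intv[OF hK, of c0 q p] c0 q True by blast
      then show False using p by blast
    next
      case False
      have "\<not> q \<le> c0" using q(2) c0 by blast
      then have "c0 \<le> q" by linarith
      then have "q \<in> I" proof -
        have "q \<le> p" using False by linarith
        then show ?thesis using intv[OF hI, of c0 p q] c0 p \<open>c0 \<le> q\<close> by blast
      qed
      then show False using q by blast
    qed
  qed
  have capI: "K \<inter> K' \<noteq> {}" if t1: "cap I K" and t2: "cap I K'" and t3: "I \<inter> K' \<noteq> {}" and t4: "is_interval K'" for I K K'
  proof -
    obtain c' where c': "c' \<in> I \<inter> K'" using t3 by blast
    then obtain c where c: "c \<in> I \<inter> K" "c' \<le> c" using t1 unfolding cap_def by blast
    then obtain c'' where c'': "c'' \<in> I \<inter> K'" "c \<le> c''" using t2 unfolding cap_def by blast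
    have "c \<in> K'" using intv[OF t4, of c' c'' c] c' c'' c by blast
    then show ?thesis using c by blast
  qed
  define Cs where "Cs = {(I,K). I \<in> P \<and> K \<in> Q \<and> I \<inter> K \<noteq> {}}"
  define phi where "phi = (\<lambda>(I,K). if cap I K then Inl I else (Inr K :: real set + real set))"
  have inj: "inj_on phi Cs"
  proof (rule inj_onI)
    fix x y assume x: "x \<in> Cs" and y: "y \<in> Cs" and e: "phi x = phi y"
    obtain I K where xx: "x = (I,K)" by (cases x)
    obtain I' K' where yy: "y = (I',K')" by (cases y)
    have m: "I \<in> P" "K \<in> Q" "I \<inter> K \<noteq> {}" "I' \<in> P" "K' \<in> Q" "I' \<inter> K' \<noteq> {}"
      using x y xx yy Cs_def by auto
    show "x = y"
    proof (cases "cap I K")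
      case True
      then have c2: "cap I' K'" using e xx yy phi_def by (auto split: if_splits)
      have II: "I = I'" using e xx yy phi_def True c2 by auto
      have "K \<inter> K' \<noteq> {}" using capI[of I K K'] True c2 II m intQ by blast
      then have "K = K'" using disQ m unfolding disjoint_def by blast
      then show ?thesis using xx yy II by simp
    next
      case False
      then have c2: "\<not> cap I' K'" using e xx yy phi_def by (auto split: if_splits)
      have KK: "K = K'" using e xx yy phi_def False c2 by auto
      have ca: "cap K I" using one[of I K] False m intP intQ by blast
      have cb: "cap K I'" using one[of I' K'] c2 m intP intQ KK by blast
      have "I \<inter> I' \<noteq> {}" using capI[of K I I'] ca cb KK m intP by (simp add: Int_commute)
      then have "I = I'" using disP m unfolding disjoint_def by blast
      then show ?thesis using xx yy KK by simp
    qed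
  qed
  have sub: "phi ` Cs \<subseteq> P <+> Q" unfolding phi_def Cs_def by (auto split: if_splits)
  have "card Cs = card (phi ` Cs)" using inj by (simp add: card_image)
  also have "\<dots> \<le> card (P <+> Q)" using sub finP finQ by (intro card_mono) auto
  also have "\<dots> = card P + card Q" using finP finQ by (rule card_Plus)
  finally show ?thesis unfolding Cs_def .
qed



lemma sep_count:
  fixes Gf :: "real \<Rightarrow> real" and PF Js :: "real set set"
  assumes finPF: "finite PF" and disPF: "disjoint PF" and intPF: "\<forall>I\<in>PF. is_interval I"
    and finJ: "finite Js" and neJ: "\<forall>J\<in>Js. J \<noteq> {}" and intJ: "\<forall>J\<in>Js. is_interval (Gf ` J)"
    and sep: "\<forall>J\<in>Js. \<forall>J'\<in>Js. J \<noteq> J' \<longrightarrow> (\<forall>x\<in>J. \<forall>y\<in>J'. Gf x \<noteq> Gf y)"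
  shows "card {(I,J). I \<in> PF \<and> J \<in> Js \<and> (\<exists>x\<in>J. Gf x \<in> I)} \<le> card PF + card Js"
proof -
  define Q where "Q = (\<lambda>J. Gf ` J) ` Js"
  define R where "R = {(I,J). I \<in> PF \<and> J \<in> Js \<and> (\<exists>x\<in>J. Gf x \<in> I)}"
  define psi where "psi = (\<lambda>(I::real set,J::real set). (I, Gf ` J))"
  have injimg: "inj_on (\<lambda>J. Gf ` J) Js"
  proof (rule inj_onI)
    fix J J' assume J: "J \<in> Js" and J': "J' \<in> Js" and e: "Gf ` J = Gf ` J'"
    show "J = J'"
    proof (rule ccontr)
      assume ne: "J \<noteq> J'"
      obtain x where x: "x \<in> J" using neJ J by blast
      then have "Gf x \<in> Gf ` J'" using e by blast
      then obtain y where "y \<in> J'" "Gf x = Gf y" by blast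
      then show False using sep J J' ne x by blast
    qed
  qed
  have disQ: "disjoint Q"
    unfolding disjoint_def
  proof (intro ballI impI)
    fix A B assume A: "A \<in> Q" and B: "B \<in> Q" and AB: "A \<noteq> B"
    obtain J where J: "J \<in> Js" "A = Gf ` J" using A Q_def by blast
    obtain J' where J': "J' \<in> Js" "B = Gf ` J'" using B Q_def by blast
    have "J \<noteq> J'" using AB J J' by blast
    then have "\<forall>x\<in>J. \<forall>y\<in>J'. Gf x \<noteq> Gf y" using sep J J' by blast
    then show "A \<inter> B = {}" using J J' by blast
  qed
  have intQ: "\<forall>K\<in>Q. is_interval K" using intJ Q_def by blast
  have finQ: "finite Q" using finJ Q_def by blast
  have cQ: "card Q \<le> card Js" unfolding Q_def by (rule card_image_le[OF finJ])
  have injpsi: "inj_on psi R"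
  proof (rule inj_onI)
    fix x y assume x: "x \<in> R" and y: "y \<in> R" and e: "psi x = psi y"
    obtain I J where xx: "x = (I,J)" by (cases x)
    obtain I' J' where yy: "y = (I',J')" by (cases y)
    have "J \<in> Js" "J' \<in> Js" using x y xx yy R_def by auto
    moreover have "I = I'" "Gf ` J = Gf ` J'" using e xx yy psi_def by auto
    ultimately show "x = y" using injimg xx yy unfolding inj_on_def by blast
  qed
  define Cs where "Cs = {(I,K). I \<in> PF \<and> K \<in> Q \<and> I \<inter> K \<noteq> {}}"
  have sub: "psi ` R \<subseteq> Cs" unfolding psi_def R_def Q_def Cs_def by auto
  have finCs: "finite Cs"
    by (rule finite_subset[of _ "PF \<times> Q"]) (use finPF finQ Cs_def in auto)
  have "card R = card (psi ` R)" using injpsi by (simp add: card_image)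
  also have "\<dots> \<le> card Cs" using sub finCs by (rule card_mono[rotated])
  also have "\<dots> \<le> card PF + card Q" unfolding Cs_def
    by (rule cells[OF finPF finQ disPF disQ intPF intQ])
  finally show ?thesis using cQ unfolding R_def by linarith
qed

lemma lin_img_interval:
  assumes "linear_fun g" "is_interval (J::real set)"
  shows "is_interval (g ` J)"
proof -
  have fe: "g = (\<lambda>x. (g 1 - g 0) * x + g 0)" by (rule ext) (rule lin_eq[OF assms(1)])
  have "continuous_on J (\<lambda>x. (g 1 - g 0) * x + g 0)" by (intro continuous_intros)
  then have "connected ((\<lambda>x. (g 1 - g 0) * x + g 0) ` J)"
    using connected_continuous_image assms(2) is_interval_connected_1 by blast
  then show ?thesis using fe is_interval_connected_1 by metis
qed

lemma count:
  fixes Gf :: "real \<Rightarrow> real" and PF PG :: "real set set" and gJ :: "real set \<Rightarrow> real \<Rightarrow> real"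
  assumes finPF: "finite PF" and disPF: "disjoint PF" and intPF: "\<forall>I\<in>PF. is_interval I"
    and finPG: "finite PG" and nePG: "\<forall>J\<in>PG. J \<noteq> {}" and intPG: "\<forall>J\<in>PG. is_interval J"
    and gJ: "\<forall>J\<in>PG. linear_fun (gJ J) \<and> (\<forall>x\<in>J. Gf x = gJ J x)"
    and sepP: "\<forall>J\<in>PG. \<forall>J'\<in>PG. J \<noteq> J' \<longrightarrow> gJ J 1 - gJ J 0 > 0 \<longrightarrow> gJ J' 1 - gJ J' 0 > 0 \<longrightarrow> (\<forall>x\<in>J. \<forall>y\<in>J'. Gf x \<noteq> Gf y)"
    and sepN: "\<forall>J\<in>PG. \<forall>J'\<in>PG. J \<noteq> J' \<longrightarrow> gJ J 1 - gJ J 0 < 0 \<longrightarrow> gJ J' 1 - gJ J' 0 < 0 \<longrightarrow> (\<forall>x\<in>J. \<forall>y\<in>J'. Gf x \<noteq> Gf y)"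
  shows "card {(I,J). I \<in> PF \<and> J \<in> PG \<and> (\<exists>x\<in>J. Gf x \<in> I)} \<le> 2 * card PF + card PG"
proof -
  define sl where "sl J = gJ J 1 - gJ J 0" for J
  define Jp where "Jp = {J\<in>PG. sl J > 0}"
  define Jn where "Jn = {J\<in>PG. sl J < 0}"
  define Jz where "Jz = {J\<in>PG. sl J = 0}"
  define RR where "RR X = {(I,J). I \<in> PF \<and> J \<in> X \<and> (\<exists>x\<in>J. Gf x \<in> I)}" for X
  have PGu: "PG = Jp \<union> (Jn \<union> Jz)" unfolding Jp_def Jn_def Jz_def by auto
  have Req: "RR PG = RR Jp \<union> (RR Jn \<union> RR Jz)" unfolding RR_def using PGu by blast
  have finR: "finite (RR X)" if "X \<subseteq> PG" for X
    by (rule finite_subset[of _ "PF \<times> PG"]) (use finPF finPG that RR_def in auto)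
  have imgint: "is_interval (Gf ` J)" if J: "J \<in> PG" for J
  proof -
    have "Gf ` J = gJ J ` J" using gJ J by (intro image_cong) auto
    then show ?thesis using lin_img_interval gJ intPG J by metis
  qed
  have finJp: "finite Jp" "finite Jn" "finite Jz" using finPG Jp_def Jn_def Jz_def by auto
  have cp: "card (RR Jp) \<le> card PF + card Jp" unfolding RR_def
  proof (rule sep_count[OF finPF disPF intPF finJp(1)])
    show "\<forall>J\<in>Jp. J \<noteq> {}" using nePG Jp_def by blast
    show "\<forall>J\<in>Jp. is_interval (Gf ` J)" using imgint Jp_def by blast
    show "\<forall>J\<in>Jp. \<forall>J'\<in>Jp. J \<noteq> J' \<longrightarrow> (\<forall>x\<in>J. \<forall>y\<in>J'. Gf x \<noteq> Gf y)"
      using sepP unfolding Jp_def sl_def by blast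
  qed
  have cn: "card (RR Jn) \<le> card PF + card Jn" unfolding RR_def
  proof (rule sep_count[OF finPF disPF intPF finJp(2)])
    show "\<forall>J\<in>Jn. J \<noteq> {}" using nePG Jn_def by blast
    show "\<forall>J\<in>Jn. is_interval (Gf ` J)" using imgint Jn_def by blast
    show "\<forall>J\<in>Jn. \<forall>J'\<in>Jn. J \<noteq> J' \<longrightarrow> (\<forall>x\<in>J. \<forall>y\<in>J'. Gf x \<noteq> Gf y)"
      using sepN unfolding Jn_def sl_def by blast
  qed
  have cz: "card (RR Jz) \<le> card Jz"
  proof -
    have "inj_on snd (RR Jz)"
    proof (rule inj_onI)
      fix u w assume u: "u \<in> RR Jz" and w: "w \<in> RR Jz" and e: "snd u = snd w"
      obtain I J where uu: "u = (I,J)" by (cases u)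
      obtain I' J' where ww: "w = (I',J')" by (cases w)
      have JJ: "J = J'" using e uu ww by simp
      obtain x where x: "x \<in> J" "Gf x \<in> I" "I \<in> PF" "J \<in> PG" "sl J = 0"
        using u uu RR_def Jz_def by auto
      obtain y where y: "y \<in> J" "Gf y \<in> I'" "I' \<in> PF"
        using w ww JJ RR_def by auto
      have lg: "linear_fun (gJ J)" using gJ x(4) by blast
      have "Gf x = gJ J x" using gJ x(4) x(1) by blast
      also have "\<dots> = sl J * x + gJ J 0" unfolding sl_def by (rule lin_eq[OF lg])
      also have "\<dots> = gJ J 0" using x(5) by simp
      finally have gx: "Gf x = gJ J 0" .
      have "Gf y = gJ J y" using gJ x(4) y(1) by blast
      also have "\<dots> = sl J * y + gJ J 0" unfolding sl_def by (rule lin_eq[OF lg])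
      also have "\<dots> = gJ J 0" using x(5) by simp
      finally have gy: "Gf y = gJ J 0" .
      have "I \<inter> I' \<noteq> {}" using gx gy x(2) y(2) by auto
      then have "I = I'" using disPF x(3) y(3) unfolding disjoint_def by blast
      then show "u = w" using uu ww JJ by simp
    qed
    moreover have "snd ` RR Jz \<subseteq> Jz" unfolding RR_def by auto
    ultimately show ?thesis using finJp(3) by (metis card_image card_mono)
  qed
  have "card (RR PG) \<le> card (RR Jp) + card (RR Jn \<union> RR Jz)" unfolding Req by (rule card_Un_le)
  also have "\<dots> \<le> card (RR Jp) + (card (RR Jn) + card (RR Jz))" using card_Un_le by simp
  finally have c1: "card (RR PG) \<le> card (RR Jp) + card (RR Jn) + card (RR Jz)" by simp
  have "card PG = card Jp + card (Jn \<union> Jz)" unfolding PGu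
    by (rule card_Un_disjoint) (use finJp in \<open>auto simp: Jp_def Jn_def Jz_def\<close>)
  also have "card (Jn \<union> Jz) = card Jn + card Jz"
    by (rule card_Un_disjoint) (use finJp in \<open>auto simp: Jn_def Jz_def\<close>)
  finally have c2: "card PG = card Jp + card Jn + card Jz" by simp
  show ?thesis using c1 c2 cp cn cz unfolding RR_def by linarith
qed



lemma H_finite:
  assumes "finite F" "finite G" "H = {f \<circ> g | f g. f \<in> F \<and> g \<in> G}"
  shows "finite H"
proof -
  have "H = (\<lambda>(f,g). f \<circ> g) ` (F \<times> G)" using assms(3) by auto
  then show ?thesis using assms(1,2) by simp
qed

lemma H_nonempty:
  assumes "F \<noteq> {}" "G \<noteq> {}" "H = {f \<circ> g | f g. f \<in> F \<and> g \<in> G}"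
  shows "H \<noteq> {}"
  using assms by blast

lemma env_le: "finite S \<Longrightarrow> s \<in> S \<Longrightarrow> lower_env S y \<le> s y"
  unfolding lower_env_def by (rule Min_le) auto

lemma env_ge: "finite S \<Longrightarrow> s \<in> S \<Longrightarrow> s y \<le> upper_env S y"
  unfolding upper_env_def by (rule Max_ge) auto

lemma env_act: "finite S \<Longrightarrow> S \<noteq> {} \<Longrightarrow> \<exists>s\<in>S. lower_env S y = s y"
proof -
  assume "finite S" "S \<noteq> {}"
  then have "Min ((\<lambda>f. f y) ` S) \<in> (\<lambda>f. f y) ` S" by (intro Min_in) auto
  then show ?thesis unfolding lower_env_def by auto
qed

lemma uenv_act: "finite S \<Longrightarrow> S \<noteq> {} \<Longrightarrow> \<exists>s\<in>S. upper_env S y = s y"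
proof -
  assume "finite S" "S \<noteq> {}"
  then have "Max ((\<lambda>f. f y) ` S) \<in> (\<lambda>f. f y) ` S" by (intro Max_in) auto
  then show ?thesis unfolding upper_env_def by auto
qed

lemma lin_mono:
  assumes "linear_fun f" "f 1 - f 0 \<ge> 0" "x \<le> y"
  shows "f x \<le> f y"
proof -
  have "(f 1 - f 0) * x \<le> (f 1 - f 0) * y" by (rule mult_left_mono[OF assms(3) assms(2)])
  then show ?thesis using lin_eq[OF assms(1), of x] lin_eq[OF assms(1), of y] by linarith
qed

lemma lin_anti:
  assumes "linear_fun f" "f 1 - f 0 \<le> 0" "x \<le> y"
  shows "f y \<le> f x"
proof -
  have "(f 1 - f 0) * y \<le> (f 1 - f 0) * x" by (rule mult_left_mono_neg[OF assms(3) assms(2)])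
  then show ?thesis using lin_eq[OF assms(1), of x] lin_eq[OF assms(1), of y] by linarith
qed

lemma lin_smono:
  assumes "linear_fun f" "f 1 - f 0 > 0" "x < y"
  shows "f x < f y"
proof -
  have "(f 1 - f 0) * x < (f 1 - f 0) * y" by (rule mult_strict_left_mono[OF assms(3) assms(2)])
  then show ?thesis using lin_eq[OF assms(1), of x] lin_eq[OF assms(1), of y] by linarith
qed

lemma lin_santi:
  assumes "linear_fun f" "f 1 - f 0 < 0" "x < y"
  shows "f y < f x"
proof -
  have "(f 1 - f 0) * y < (f 1 - f 0) * x" by (rule mult_strict_left_mono_neg[OF assms(3) assms(2)])
  then show ?thesis using lin_eq[OF assms(1), of x] lin_eq[OF assms(1), of y] by linarith
qed

lemma env_lower:
  assumes finF: "finite F" and neF: "F \<noteq> {}" and finG: "finite G" and neG: "G \<noteq> {}"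
    and linF: "\<forall>f\<in>F. linear_fun f" and linG: "\<forall>g\<in>G. linear_fun g"
    and H: "H = {f \<circ> g | f g. f \<in> F \<and> g \<in> G}"
  shows "lower_env H x = min (lower_env F (lower_env G x)) (lower_env F (upper_env G x))"
proof -
  have finH: "finite H" using H_finite[OF finF finG H] .
  define a where "a = lower_env G x"
  define b where "b = upper_env G x"
  define m where "m = min (lower_env F a) (lower_env F b)"
  obtain g1 where g1: "g1 \<in> G" "a = g1 x" using env_act[OF finG neG] a_def by blast
  obtain g2 where g2: "g2 \<in> G" "b = g2 x" using uenv_act[OF finG neG] b_def by blast
  obtain f1 where f1: "f1 \<in> F" "lower_env F a = f1 a" using env_act[OF finF neF] by blast
  obtain f2 where f2: "f2 \<in> F" "lower_env F b = f2 b" using env_act[OF finF neF] by blast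
  have "Min ((\<lambda>h. h x) ` H) = m"
  proof (rule Min_eqI)
    show "finite ((\<lambda>h. h x) ` H)" using finH by simp
  next
    fix y assume "y \<in> (\<lambda>h. h x) ` H"
    then obtain f g where fg: "f \<in> F" "g \<in> G" "y = f (g x)" using H by auto
    have lf: "linear_fun f" using linF fg by blast
    have ag: "a \<le> g x" using env_le[OF finG fg(2)] a_def by simp
    have gb: "g x \<le> b" using env_ge[OF finG fg(2)] b_def by simp
    show "m \<le> y"
    proof (cases "f 1 - f 0 \<ge> 0")
      case True
      have "f a \<le> f (g x)" by (rule lin_mono[OF lf True ag])
      moreover have "lower_env F a \<le> f a" by (rule env_le[OF finF fg(1)])
      ultimately show ?thesis using fg(3) m_def by linarith
    next
      case False
      have "f b \<le> f (g x)" by (rule lin_anti[OF lf _ gb]) (use False in linarith)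
      moreover have "lower_env F b \<le> f b" by (rule env_le[OF finF fg(1)])
      ultimately show ?thesis using fg(3) m_def by linarith
    qed
  next
    show "m \<in> (\<lambda>h. h x) ` H"
    proof (cases "lower_env F a \<le> lower_env F b")
      case True
      have "f1 \<circ> g1 \<in> H" using H f1 g1 by blast
      moreover have "(f1 \<circ> g1) x = m" using True m_def f1 g1 by simp
      ultimately show ?thesis by (metis image_eqI)
    next
      case False
      have "f2 \<circ> g2 \<in> H" using H f2 g2 by blast
      moreover have "(f2 \<circ> g2) x = m" using False m_def f2 g2 by simp
      ultimately show ?thesis by (metis image_eqI)
    qed
  qed
  then show ?thesis unfolding lower_env_def[of H] m_def a_def b_def by simp
qed

lemma neg_env:
  assumes "finite S" "S \<noteq> {}"
  shows "upper_env S x = - lower_env ((\<lambda>f y. - f y) ` S) x"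
proof -
  have e: "(\<lambda>f. f x) ` ((\<lambda>f y. - f y) ` S) = uminus ` ((\<lambda>f. f x) ` S)"
    by (simp add: image_image)
  have uu: "uminus ` uminus ` A = A" for A :: "real set" by (simp add: image_image)
  have "- Max ((\<lambda>f. f x) ` S) = Min (uminus ` ((\<lambda>f. f x) ` S))"
    using assms by (intro minus_Max_eq_Min) auto
  then show ?thesis unfolding lower_env_def upper_env_def e by linarith
qed

lemma negH:
  assumes H: "H = {f \<circ> g | f g. f \<in> F \<and> g \<in> G}"
  shows "(\<lambda>f y. - f y) ` H = {f \<circ> g | f g. f \<in> (\<lambda>f y. - f y) ` F \<and> g \<in> G}"
proof (intro set_eqI iffI)
  fix h assume "h \<in> (\<lambda>f y. - f y) ` H"
  then obtain f g where fg: "f \<in> F" "g \<in> G" "h = (\<lambda>y. - (f \<circ> g) y)" using H by auto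
  then have "h = (\<lambda>y. - f y) \<circ> g" by (auto simp: comp_def)
  moreover have "(\<lambda>y. - f y) \<in> (\<lambda>f y. - f y) ` F" using fg by blast
  ultimately show "h \<in> {f \<circ> g | f g. f \<in> (\<lambda>f y. - f y) ` F \<and> g \<in> G}" using fg by blast
next
  fix h assume "h \<in> {f \<circ> g | f g. f \<in> (\<lambda>f y. - f y) ` F \<and> g \<in> G}"
  then obtain f g where fg: "f \<in> F" "g \<in> G" "h = (\<lambda>y. - f y) \<circ> g" by blast
  then have "h = (\<lambda>y. - (f \<circ> g) y)" by (auto simp: comp_def)
  moreover have "f \<circ> g \<in> H" using H fg by blast
  ultimately show "h \<in> (\<lambda>f y. - f y) ` H" by blast
qed



lemma ppart_unfold:
  assumes "ppart h P"
  shows "finite P" "\<Union>P = UNIV" "disjoint P" "\<And>I. I \<in> P \<Longrightarrow> I \<noteq> {}"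
    "\<And>I. I \<in> P \<Longrightarrow> is_interval I" "\<And>I. I \<in> P \<Longrightarrow> \<exists>a b. \<forall>x\<in>I. h x = a * x + b"
  using assms unfolding ppart_def by simp_all

lemma choose_lines:
  assumes "ppart h P" "finite S" "\<forall>s\<in>S. linear_fun s" "\<forall>y. \<exists>s\<in>S. h y = s y"
  shows "\<exists>c. \<forall>I\<in>P. c I \<in> S \<and> (\<forall>y\<in>I. h y = c I y)"
proof -
  have "\<forall>I\<in>P. \<exists>s. s \<in> S \<and> (\<forall>y\<in>I. h y = s y)"
  proof
    fix I assume I: "I \<in> P"
    obtain a b where ab: "\<forall>x\<in>I. h x = a * x + b" using ppart_unfold(6)[OF assms(1) I] by blast
    have "\<exists>s\<in>S. \<forall>y\<in>I. h y = s y"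
      by (rule piece_line[OF assms(2,3,4) ppart_unfold(4)[OF assms(1) I] ppart_unfold(5)[OF assms(1) I] ab])
    then show "\<exists>s. s \<in> S \<and> (\<forall>y\<in>I. h y = s y)" by blast
  qed
  then show ?thesis by (rule bchoice)
qed

lemma pieces_lower:
  assumes finF: "finite F" and neF: "F \<noteq> {}" and finG: "finite G" and neG: "G \<noteq> {}"
    and linF: "\<forall>f\<in>F. linear_fun f" and linG: "\<forall>g\<in>G. linear_fun g"
    and H: "H = {f \<circ> g | f g. f \<in> F \<and> g \<in> G}"
  shows "num_pieces (lower_env H) \<le> 4 * num_pieces (lower_env F)
           + 2 * num_pieces (lower_env G) + 2 * num_pieces (upper_env G)"
proof -
  define Fd where "Fd = lower_env F"
  define Gd where "Gd = lower_env G"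
  define Gu where "Gu = upper_env G"
  define Hd where "Hd = lower_env H"
  define nG :: "(real \<Rightarrow> real) set" where "nG = (\<lambda>f y. - f y) ` G"
  have finnG: "finite nG" using finG nG_def by simp
  have nenG: "nG \<noteq> {}" using neG nG_def by simp
  have linnG: "\<forall>g\<in>nG. linear_fun g" using linG lin_neg nG_def by blast
  have Gu_eq: "Gu = (\<lambda>x. - lower_env nG x)" unfolding Gu_def nG_def
    by (rule ext) (rule neg_env[OF finG neG])
  have finH: "finite H" by (rule H_finite[OF finF finG H])
  obtain P1 where "ppart Fd P1" using envT[OF finF neF linF] Fd_def by blast
  then obtain PF where PF: "ppart Fd PF" "card PF = num_pieces Fd" using num_pieces_ex by blast
  obtain P2 where "ppart Gd P2" using envT[OF finG neG linG] Gd_def by blast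
  then obtain PGd where PGd: "ppart Gd PGd" "card PGd = num_pieces Gd" using num_pieces_ex by blast
  obtain P3 where "ppart (lower_env nG) P3" using envT[OF finnG nenG linnG] by blast
  then have "ppart Gu P3" unfolding Gu_eq by (rule ppart_neg)
  then obtain PGu where PGu: "ppart Gu PGu" "card PGu = num_pieces Gu" using num_pieces_ex by blast
  note PFp = ppart_unfold[OF PF(1)]
  note PGdp = ppart_unfold[OF PGd(1)]
  note PGup = ppart_unfold[OF PGu(1)]
  have actF: "\<forall>y. \<exists>s\<in>F. Fd y = s y" using env_act[OF finF neF] Fd_def by blast
  have actGd: "\<forall>y. \<exists>s\<in>G. Gd y = s y" using env_act[OF finG neG] Gd_def by blast
  have actGu: "\<forall>y. \<exists>s\<in>G. Gu y = s y" using uenv_act[OF finG neG] Gu_def by blast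
  obtain fF where fF: "\<forall>I\<in>PF. fF I \<in> F \<and> (\<forall>y\<in>I. Fd y = fF I y)"
    using choose_lines[OF PF(1) finF linF actF] by blast
  obtain gD where gD: "\<forall>J\<in>PGd. gD J \<in> G \<and> (\<forall>y\<in>J. Gd y = gD J y)"
    using choose_lines[OF PGd(1) finG linG actGd] by blast
  obtain gU where gU: "\<forall>J\<in>PGu. gU J \<in> G \<and> (\<forall>y\<in>J. Gu y = gU J y)"
    using choose_lines[OF PGu(1) finG linG actGu] by blast
  define R1 where "R1 = {(I,J). I \<in> PF \<and> J \<in> PGd \<and> (\<exists>x\<in>J. Gd x \<in> I)}"
  define R2 where "R2 = {(I,J). I \<in> PF \<and> J \<in> PGu \<and> (\<exists>x\<in>J. Gu x \<in> I)}"
  define L where "L = (\<lambda>(I,J). fF I \<circ> gD J) ` R1 \<union> (\<lambda>(I,J). fF I \<circ> gU J) ` R2"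
  have finR1: "finite R1"
    by (rule finite_subset[of _ "PF \<times> PGd"]) (use PFp(1) PGdp(1) R1_def in auto)
  have finR2: "finite R2"
    by (rule finite_subset[of _ "PF \<times> PGu"]) (use PFp(1) PGup(1) R2_def in auto)
  have finL: "finite L" unfolding L_def using finR1 finR2 by simp
  have LH: "L \<subseteq> H"
  proof
    fix l assume "l \<in> L"
    then obtain I J where "(I \<in> PF \<and> J \<in> PGd \<and> l = fF I \<circ> gD J) \<or> (I \<in> PF \<and> J \<in> PGu \<and> l = fF I \<circ> gU J)"
      unfolding L_def R1_def R2_def by auto
    then show "l \<in> H" using fF gD gU H by blast
  qed
  have linH: "\<forall>h\<in>H. linear_fun h"
  proof
    fix h assume "h \<in> H"
    then obtain f g where "f \<in> F" "g \<in> G" "h = f \<circ> g" using H by blast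
    then show "linear_fun h" using linF linG lin_comp by blast
  qed
  have linL: "\<forall>l\<in>L. linear_fun l" using LH linH by blast
  have envH: "Hd x = min (Fd (Gd x)) (Fd (Gu x))" for x
    unfolding Hd_def Fd_def Gd_def Gu_def by (rule env_lower[OF assms])
  have cover: "\<exists>l\<in>L. Hd x = l x" for x
  proof -
    obtain J1 where J1: "J1 \<in> PGd" "x \<in> J1" using PGdp(2) by blast
    obtain J2 where J2: "J2 \<in> PGu" "x \<in> J2" using PGup(2) by blast
    obtain I1 where I1: "I1 \<in> PF" "Gd x \<in> I1" using PFp(2) by blast
    obtain I2 where I2: "I2 \<in> PF" "Gu x \<in> I2" using PFp(2) by blast
    show ?thesis
    proof (cases "Fd (Gd x) \<le> Fd (Gu x)")
      case True
      have "(I1,J1) \<in> R1" using I1 J1 R1_def by blast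
      then have inL: "fF I1 \<circ> gD J1 \<in> L" unfolding L_def by force
      have "(fF I1 \<circ> gD J1) x = fF I1 (gD J1 x)" by simp
      also have "gD J1 x = Gd x" using gD J1 by auto
      also have "fF I1 (Gd x) = Fd (Gd x)" using fF I1 by auto
      also have "\<dots> = Hd x" using envH[of x] True by simp
      finally show ?thesis using inL by metis
    next
      case False
      have "(I2,J2) \<in> R2" using I2 J2 R2_def by blast
      then have inL: "fF I2 \<circ> gU J2 \<in> L" unfolding L_def by force
      have "(fF I2 \<circ> gU J2) x = fF I2 (gU J2 x)" by simp
      also have "gU J2 x = Gu x" using gU J2 by auto
      also have "fF I2 (Gu x) = Fd (Gu x)" using fF I2 by auto
      also have "\<dots> = Hd x" using envH[of x] False by simp
      finally show ?thesis using inL by metis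
    qed
  qed
  have envL: "lower_env L = Hd"
  proof (rule ext)
    fix x
    show "lower_env L x = Hd x" unfolding lower_env_def[of L]
    proof (rule Min_eqI)
      show "finite ((\<lambda>l. l x) ` L)" using finL by simp
    next
      fix y assume "y \<in> (\<lambda>l. l x) ` L"
      then obtain l where l: "l \<in> L" "y = l x" by blast
      have "lower_env H x \<le> l x" using env_le[OF finH, of l x] LH l(1) by blast
      then show "Hd x \<le> y" using l Hd_def by simp
    next
      show "Hd x \<in> (\<lambda>l. l x) ` L" using cover[of x] by auto
    qed
  qed
  have neL: "L \<noteq> {}" using cover[of 0] by blast
  obtain P where P: "ppart (lower_env L) P" "card P \<le> card L" using envT[OF finL neL linL] by blast
  have np: "num_pieces Hd \<le> card L" using num_pieces_le[OF P(1)] P(2) envL by simp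
  have "card L \<le> card ((\<lambda>(I,J). fF I \<circ> gD J) ` R1) + card ((\<lambda>(I,J). fF I \<circ> gU J) ` R2)"
    unfolding L_def by (rule card_Un_le)
  also have "\<dots> \<le> card R1 + card R2"
    by (intro add_mono card_image_le finR1 finR2)
  finally have cL: "card L \<le> card R1 + card R2" .
  have dis_ne: "x \<noteq> y" if "disjoint P" "J \<in> P" "J' \<in> P" "J \<noteq> J'" "x \<in> J" "y \<in> J'" for P J J' and x y :: real
    using that unfolding disjoint_def by blast
  have gDl: "linear_fun (gD J)" "Gd z = gD J z" if "J \<in> PGd" "z \<in> J" for J z
    using gD linG that by auto
  have gDle: "Gd z \<le> gD J z" if "J \<in> PGd" for J z
    using env_le[OF finG, of "gD J" z] gD that Gd_def by auto
  have gUl: "linear_fun (gU J)" "Gu z = gU J z" if "J \<in> PGu" "z \<in> J" for J z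
    using gU linG that by auto
  have gUge: "gU J z \<le> Gu z" if "J \<in> PGu" for J z
    using env_ge[OF finG, of "gU J" z] gU that Gu_def by auto
  have c1: "card R1 \<le> 2 * card PF + card PGd" unfolding R1_def
  proof (rule count[where gJ = gD])
    show "finite PF" "disjoint PF" "\<forall>I\<in>PF. is_interval I" using PFp by auto
    show "finite PGd" "\<forall>J\<in>PGd. J \<noteq> {}" "\<forall>J\<in>PGd. is_interval J" using PGdp by auto
    show "\<forall>J\<in>PGd. linear_fun (gD J) \<and> (\<forall>x\<in>J. Gd x = gD J x)" using gD linG by auto
    have sP: "Gd x \<noteq> Gd y" if J: "J \<in> PGd" and J': "J' \<in> PGd" and JJ: "J \<noteq> J'"
      and s1: "gD J 1 - gD J 0 > 0" and s2: "gD J' 1 - gD J' 0 > 0" and x: "x \<in> J" and y: "y \<in> J'" for J J' x y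
    proof (cases "x < y")
      case True
      have "Gd x \<le> gD J' x" by (rule gDle[OF J'])
      also have "\<dots> < gD J' y" by (rule lin_smono[OF gDl(1)[OF J' y] s2 True])
      also have "\<dots> = Gd y" using gDl(2)[OF J' y] by simp
      finally show ?thesis by simp
    next
      case False
      then have yx: "y < x" using dis_ne[OF PGdp(3) J J' JJ x y] by linarith
      have "Gd y \<le> gD J y" by (rule gDle[OF J])
      also have "\<dots> < gD J x" by (rule lin_smono[OF gDl(1)[OF J x] s1 yx])
      also have "\<dots> = Gd x" using gDl(2)[OF J x] by simp
      finally show ?thesis by simp
    qed
    then show "\<forall>J\<in>PGd. \<forall>J'\<in>PGd. J \<noteq> J' \<longrightarrow> gD J 1 - gD J 0 > 0 \<longrightarrow> gD J' 1 - gD J' 0 > 0 \<longrightarrow> (\<forall>x\<in>J. \<forall>y\<in>J'. Gd x \<noteq> Gd y)"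
      by blast
    have sN: "Gd x \<noteq> Gd y" if J: "J \<in> PGd" and J': "J' \<in> PGd" and JJ: "J \<noteq> J'"
      and s1: "gD J 1 - gD J 0 < 0" and s2: "gD J' 1 - gD J' 0 < 0" and x: "x \<in> J" and y: "y \<in> J'" for J J' x y
    proof (cases "x < y")
      case True
      have "Gd y \<le> gD J y" by (rule gDle[OF J])
      also have "\<dots> < gD J x" by (rule lin_santi[OF gDl(1)[OF J x] s1 True])
      also have "\<dots> = Gd x" using gDl(2)[OF J x] by simp
      finally show ?thesis by simp
    next
      case False
      then have yx: "y < x" using dis_ne[OF PGdp(3) J J' JJ x y] by linarith
      have "Gd x \<le> gD J' x" by (rule gDle[OF J'])
      also have "\<dots> < gD J' y" by (rule lin_santi[OF gDl(1)[OF J' y] s2 yx])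
      also have "\<dots> = Gd y" using gDl(2)[OF J' y] by simp
      finally show ?thesis by simp
    qed
    then show "\<forall>J\<in>PGd. \<forall>J'\<in>PGd. J \<noteq> J' \<longrightarrow> gD J 1 - gD J 0 < 0 \<longrightarrow> gD J' 1 - gD J' 0 < 0 \<longrightarrow> (\<forall>x\<in>J. \<forall>y\<in>J'. Gd x \<noteq> Gd y)"
      by blast
  qed
  have c2: "card R2 \<le> 2 * card PF + card PGu" unfolding R2_def
  proof (rule count[where gJ = gU])
    show "finite PF" "disjoint PF" "\<forall>I\<in>PF. is_interval I" using PFp by auto
    show "finite PGu" "\<forall>J\<in>PGu. J \<noteq> {}" "\<forall>J\<in>PGu. is_interval J" using PGup by auto
    show "\<forall>J\<in>PGu. linear_fun (gU J) \<and> (\<forall>x\<in>J. Gu x = gU J x)" using gU linG by auto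
    have sP: "Gu x \<noteq> Gu y" if J: "J \<in> PGu" and J': "J' \<in> PGu" and JJ: "J \<noteq> J'"
      and s1: "gU J 1 - gU J 0 > 0" and s2: "gU J' 1 - gU J' 0 > 0" and x: "x \<in> J" and y: "y \<in> J'" for J J' x y
    proof (cases "x < y")
      case True
      have "Gu x = gU J x" using gUl(2)[OF J x] by simp
      also have "\<dots> < gU J y" by (rule lin_smono[OF gUl(1)[OF J x] s1 True])
      also have "\<dots> \<le> Gu y" by (rule gUge[OF J])
      finally show ?thesis by simp
    next
      case False
      then have yx: "y < x" using dis_ne[OF PGup(3) J J' JJ x y] by linarith
      have "Gu y = gU J' y" using gUl(2)[OF J' y] by simp
      also have "\<dots> < gU J' x" by (rule lin_smono[OF gUl(1)[OF J' y] s2 yx])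
      also have "\<dots> \<le> Gu x" by (rule gUge[OF J'])
      finally show ?thesis by simp
    qed
    then show "\<forall>J\<in>PGu. \<forall>J'\<in>PGu. J \<noteq> J' \<longrightarrow> gU J 1 - gU J 0 > 0 \<longrightarrow> gU J' 1 - gU J' 0 > 0 \<longrightarrow> (\<forall>x\<in>J. \<forall>y\<in>J'. Gu x \<noteq> Gu y)"
      by blast
    have sN: "Gu x \<noteq> Gu y" if J: "J \<in> PGu" and J': "J' \<in> PGu" and JJ: "J \<noteq> J'"
      and s1: "gU J 1 - gU J 0 < 0" and s2: "gU J' 1 - gU J' 0 < 0" and x: "x \<in> J" and y: "y \<in> J'" for J J' x y
    proof (cases "x < y")
      case True
      have "Gu y = gU J' y" using gUl(2)[OF J' y] by simp
      also have "\<dots> < gU J' x" by (rule lin_santi[OF gUl(1)[OF J' y] s2 True])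
      also have "\<dots> \<le> Gu x" by (rule gUge[OF J'])
      finally show ?thesis by simp
    next
      case False
      then have yx: "y < x" using dis_ne[OF PGup(3) J J' JJ x y] by linarith
      have "Gu x = gU J x" using gUl(2)[OF J x] by simp
      also have "\<dots> < gU J y" by (rule lin_santi[OF gUl(1)[OF J x] s1 yx])
      also have "\<dots> \<le> Gu y" by (rule gUge[OF J])
      finally show ?thesis by simp
    qed
    then show "\<forall>J\<in>PGu. \<forall>J'\<in>PGu. J \<noteq> J' \<longrightarrow> gU J 1 - gU J 0 < 0 \<longrightarrow> gU J' 1 - gU J' 0 < 0 \<longrightarrow> (\<forall>x\<in>J. \<forall>y\<in>J'. Gu x \<noteq> Gu y)"
      by blast
  qed
  have "num_pieces Hd \<le> 4 * card PF + card PGd + card PGu" using np cL c1 c2 by linarith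
  then show ?thesis using PF(2) PGd(2) PGu(2) unfolding Hd_def Fd_def Gd_def Gu_def by linarith
qed



theorem lemma1:
  fixes F G H :: "(real \<Rightarrow> real) set"
  assumes "finite F" "F \<noteq> {}" "finite G" "G \<noteq> {}"
    and "\<forall>f\<in>F. linear_fun f" "\<forall>g\<in>G. linear_fun g"
    and "H = {f \<circ> g | f g. f \<in> F \<and> g \<in> G}"
  shows "lower_env H = (\<lambda>x. min (lower_env F (lower_env G x)) (lower_env F (upper_env G x))) \<and>
    upper_env H = (\<lambda>x. max (upper_env F (lower_env G x)) (upper_env F (upper_env G x))) \<and>
    num_pieces (lower_env H) \<le> 4 * num_pieces (lower_env F)
           + 2 * num_pieces (lower_env G) + 2 * num_pieces (upper_env G) \<and>
    num_pieces (upper_env H) \<le> 4 * num_pieces (upper_env F)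
           + 2 * num_pieces (lower_env G) + 2 * num_pieces (upper_env G)"
proof -
  note finF = assms(1) and neF = assms(2) and finG = assms(3) and neG = assms(4)
    and linF = assms(5) and linG = assms(6) and H = assms(7)
  define nF :: "(real \<Rightarrow> real) set" where "nF = (\<lambda>f y. - f y) ` F"
  define nH :: "(real \<Rightarrow> real) set" where "nH = (\<lambda>f y. - f y) ` H"
  have finnF: "finite nF" using finF nF_def by simp
  have nenF: "nF \<noteq> {}" using neF nF_def by simp
  have linnF: "\<forall>f\<in>nF. linear_fun f" using linF lin_neg nF_def by blast
  have nHe: "nH = {f \<circ> g | f g. f \<in> nF \<and> g \<in> G}" unfolding nH_def nF_def by (rule negH[OF H])
  have finH: "finite H" by (rule H_finite[OF finF finG H])
  have neH: "H \<noteq> {}" by (rule H_nonempty[OF neF neG H])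
  have p1: "lower_env H = (\<lambda>x. min (lower_env F (lower_env G x)) (lower_env F (upper_env G x)))"
    by (rule ext) (rule env_lower[OF assms])
  have uH: "upper_env H = (\<lambda>x. - lower_env nH x)" unfolding nH_def
    by (rule ext) (rule neg_env[OF finH neH])
  have uF: "upper_env F = (\<lambda>x. - lower_env nF x)" unfolding nF_def
    by (rule ext) (rule neg_env[OF finF neF])
  have lnF: "lower_env nF = (\<lambda>x. - upper_env F x)" unfolding uF by simp
  have p2: "upper_env H = (\<lambda>x. max (upper_env F (lower_env G x)) (upper_env F (upper_env G x)))"
  proof (rule ext)
    fix x
    have "upper_env H x = - lower_env nH x" using uH by simp
    also have "lower_env nH x = min (lower_env nF (lower_env G x)) (lower_env nF (upper_env G x))"
      by (rule env_lower[OF finnF nenF finG neG linnF linG nHe])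
    finally show "upper_env H x = max (upper_env F (lower_env G x)) (upper_env F (upper_env G x))"
      unfolding lnF by linarith
  qed
  have p3: "num_pieces (lower_env H) \<le> 4 * num_pieces (lower_env F)
           + 2 * num_pieces (lower_env G) + 2 * num_pieces (upper_env G)"
    by (rule pieces_lower[OF assms])
  have "num_pieces (lower_env nH) \<le> 4 * num_pieces (lower_env nF)
           + 2 * num_pieces (lower_env G) + 2 * num_pieces (upper_env G)"
    by (rule pieces_lower[OF finnF nenF finG neG linnF linG nHe])
  moreover have "num_pieces (upper_env H) = num_pieces (lower_env nH)"
    unfolding uH by (rule num_pieces_neg)
  moreover have "num_pieces (lower_env nF) = num_pieces (upper_env F)"
    unfolding lnF by (rule num_pieces_neg)
  ultimately have p4: "num_pieces (upper_env H) \<le> 4 * num_pieces (upper_env F)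
           + 2 * num_pieces (lower_env G) + 2 * num_pieces (upper_env G)" by simp
  show ?thesis using p1 p2 p3 p4 by blast
qed

end
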